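(* Consider the following two-stage zero-sum game between Alice (A) and Bob (B), with a constant $c\in(0,1/3)$. The initial state $X_1$ is uniform on $\{-1,+1\}$; Alice observes $X_1$, Bob observes nothing. At stage 1 Alice chooses $U_1^A\in\{-1,+1\}$ and $X_2=X_1U_1^A$. At stage 2 Bob, observing only $U_1^A$, chooses $U_2^B\in\{\mathrm{U},\mathrm{D}\}$. Alice's rewards are $R_1^A=c$ if $U_1^A=+1$ and $0$ if $U_1^A=-1$; $R_2^A=2$ if $X_2=+1,U_2^B=\mathrm{U}$, $R_2^A=1$ if $X_2=-1,U_2^B=\mathrm{D}$, and $R_2^A=0$ otherwise; Bob's rewards are $R_t^B=-R_t^A$. Then no belief-based equilibrium exists in this game.
   Context: A behavioral strategy profile consists of Alice's map $g_1^A:\{-1,+1\}\to\Delta(\{-1,+1\})$ from $X_1$ to a mixed action and Bob's map $g_2^B:\{-1,+1\}\to\Delta(\{\mathrm{U},\mathrm{D}\})$ from $U_1^A$ to a mixed action; payoffs are expected total rewards; a Bayes–Nash equilibrium (BNE) is a profile where neither player can increase their expected payoff by unilaterally changing strategy. For a profile $g$ and each $u\in\{-1,+1\}$ with $\Pr^g(U_1^A=u)>0$, let $\pi_2^u\in\Delta(\{-1,+1\})$ be the common-information-based belief $\pi_2^u(x)=\Pr^g(X_2=x\mid U_1^A=u)$. A belief-based equilibrium is a BNE $g$ for which there exists a function $\sigma:\Delta(\{-1,+1\})\to\Delta(\{\mathrm{U},\mathrm{D}\})$ with $g_2^B(u)=\sigma(\pi_2^u)$ for every $u$ with $\Pr^g(U_1^A=u)>0$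 (i.e. Bob's stage-2 mixed action depends on his information only through the belief on $X_2$; Bob has no private information, and Alice's stage-1 common-information belief is the fixed prior, so Alice's strategy is unrestricted). *)

theory Defs
  imports "HOL-Probability.Probability"
begin

datatype pm = Minus | Plus

text \<open>Multiplication on {-1,+1}: X2 = X1 * U1.\<close>
definition pm_mul :: "pm \<Rightarrow> pm \<Rightarrow> pm" where
  "pm_mul a b = (if a = b then Plus else Minus)"

datatype bact = Up | Down

definition rewA1 :: "real \<Rightarrow> pm \<Rightarrow> real" where
  "rewA1 c u = (if u = Plus then c else 0)"

definition rewA2 :: "pm \<Rightarrow> bact \<Rightarrow> real" where
  "rewA2 x b = (if x = Plus \<and> b = Up then 2 else if x = Minus \<and> b = Down then 1 else 0)"

definition joint :: "(pm \<Rightarrow> pm pmf) \<Rightarrow> (pm \<Rightarrow> bact pmf) \<Rightarrow> (pm \<times> pm \<times> bact) pmf" where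
  "joint g1 g2 =
     bind_pmf (pmf_of_set {Minus, Plus}) (\<lambda>x1.
     bind_pmf (g1 x1) (\<lambda>u.
     bind_pmf (g2 u) (\<lambda>b. return_pmf (x1, u, b))))"

definition payA :: "real \<Rightarrow> (pm \<Rightarrow> pm pmf) \<Rightarrow> (pm \<Rightarrow> bact pmf) \<Rightarrow> real" where
  "payA c g1 g2 = measure_pmf.expectation (joint g1 g2)
      (\<lambda>(x1, u, b). rewA1 c u + rewA2 (pm_mul x1 u) b)"

definition payB :: "real \<Rightarrow> (pm \<Rightarrow> pm pmf) \<Rightarrow> (pm \<Rightarrow> bact pmf) \<Rightarrow> real" where
  "payB c g1 g2 = measure_pmf.expectation (joint g1 g2)
      (\<lambda>(x1, u, b). - (rewA1 c u + rewA2 (pm_mul x1 u) b))"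

definition is_BNE :: "real \<Rightarrow> (pm \<Rightarrow> pm pmf) \<Rightarrow> (pm \<Rightarrow> bact pmf) \<Rightarrow> bool" where
  "is_BNE c g1 g2 \<longleftrightarrow>
     (\<forall>g1'. payA c g1' g2 \<le> payA c g1 g2) \<and> (\<forall>g2'. payB c g1 g2' \<le> payB c g1 g2)"

definition probU :: "(pm \<Rightarrow> pm pmf) \<Rightarrow> (pm \<Rightarrow> bact pmf) \<Rightarrow> pm \<Rightarrow> real" where
  "probU g1 g2 u = measure_pmf.prob (joint g1 g2) {\<omega>. fst (snd \<omega>) = u}"

definition belief2 :: "(pm \<Rightarrow> pm pmf) \<Rightarrow> (pm \<Rightarrow> bact pmf) \<Rightarrow> pm \<Rightarrow> pm pmf" where
  "belief2 g1 g2 u = map_pmf (\<lambda>(x1, u', b). pm_mul x1 u')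
      (cond_pmf (joint g1 g2) {\<omega>. fst (snd \<omega>) = u})"

definition belief_based_eq :: "real \<Rightarrow> (pm \<Rightarrow> pm pmf) \<Rightarrow> (pm \<Rightarrow> bact pmf) \<Rightarrow> bool" where
  "belief_based_eq c g1 g2 \<longleftrightarrow> is_BNE c g1 g2 \<and>
     (\<exists>\<sigma> :: pm pmf \<Rightarrow> bact pmf. \<forall>u. probU g1 g2 u > 0 \<longrightarrow> g2 u = \<sigma> (belief2 g1 g2 u))"

end

theory Submission
  imports Defs
begin

lemma UNIV_pm: "(UNIV :: pm set) = {Minus, Plus}"
  using pm.exhaust by auto

lemma UNIV_bact: "(UNIV :: bact set) = {Up, Down}"
  using bact.exhaust by auto

instance pm :: finite
  by standard (simp add: UNIV_pm)

instance bact :: finite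
  by standard (simp add: UNIV_bact)

lemma pmf_pm_sum: "pmf (h :: pm pmf) Minus = 1 - pmf h Plus"
proof -
  have "set_pmf h \<subseteq> {Minus, Plus}" using pm.exhaust by blast
  then show ?thesis using sum_pmf_eq_1[of "{Minus, Plus}" h] by simp
qed

lemma pmf_bact_sum: "pmf (h :: bact pmf) Down = 1 - pmf h Up"
proof -
  have "set_pmf h \<subseteq> {Up, Down}" using bact.exhaust by blast
  then show ?thesis using sum_pmf_eq_1[of "{Up, Down}" h] by simp
qed

lemma E_pm: "measure_pmf.expectation (h :: pm pmf) f = pmf h Plus * f Plus + (1 - pmf h Plus) * f Minus"
  by (subst integral_measure_pmf_real[of UNIV]) (auto simp: UNIV_pm pmf_pm_sum intro: pm.exhaust)

lemma E_bact: "measure_pmf.expectation (h :: bact pmf) f = pmf h Up * f Up + (1 - pmf h Up) * f Down"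
  by (subst integral_measure_pmf_real[of UNIV]) (auto simp: UNIV_bact pmf_bact_sum intro: bact.exhaust)

definition A8 :: "(pm \<times> pm \<times> bact) set" where
  "A8 = {(Minus,Minus,Up),(Minus,Minus,Down),(Minus,Plus,Up),(Minus,Plus,Down),
         (Plus,Minus,Up),(Plus,Minus,Down),(Plus,Plus,Up),(Plus,Plus,Down)}"

lemma A8_UNIV: "A8 = UNIV"
proof -
  have "w \<in> A8" for w :: "pm \<times> pm \<times> bact"
  proof -
    obtain x u b where w: "w = (x,u,b)" by (cases w) auto
    show ?thesis unfolding w A8_def by (cases x; cases u; cases b) auto
  qed
  then show ?thesis by auto
qed

lemma pmf_joint: "pmf (joint g1 g2) (x,u,b) = pmf (g1 x) u * pmf (g2 u) b / 2"
  unfolding joint_def pmf_bind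
  apply (simp add: integral_pmf_of_set E_pm E_bact)
  apply (cases x; cases u; cases b; simp add: pmf_pm_sum pmf_bact_sum)
  done

definition F :: "real \<Rightarrow> real \<Rightarrow> real \<Rightarrow> real \<Rightarrow> real \<Rightarrow> real" where
  "F c p q a b = 1/2*(p*(c+2*a)+(1-p)*(1-b)) + 1/2*(q*(c+1-a)+(1-q)*(2*b))"

abbreviation pp where "pp g1 \<equiv> pmf (g1 Plus) Plus"
abbreviation qq where "qq g1 \<equiv> pmf (g1 Minus) Plus"
abbreviation aa where "aa g2 \<equiv> pmf (g2 Plus) Up"
abbreviation bb where "bb g2 \<equiv> pmf (g2 Minus) Up"

lemma payA_F: "payA c g1 g2 = F c (pp g1) (qq g1) (aa g2) (bb g2)"
  unfolding payA_def
  apply (subst integral_measure_pmf_real[of A8])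
    apply (simp_all add: A8_UNIV)
  apply (simp add: A8_UNIV[symmetric])
  apply (simp add: A8_def pmf_joint rewA1_def rewA2_def pm_mul_def pmf_pm_sum pmf_bact_sum F_def)
  apply (simp add: field_simps)
  done

lemma payB_F: "payB c g1 g2 = - F c (pp g1) (qq g1) (aa g2) (bb g2)"
  unfolding payB_def
  apply (subst integral_measure_pmf_real[of A8])
    apply (simp_all add: A8_UNIV)
  apply (simp add: A8_UNIV[symmetric])
  apply (simp add: A8_def pmf_joint rewA1_def rewA2_def pm_mul_def pmf_pm_sum pmf_bact_sum F_def)
  apply (simp add: field_simps)
  done

lemma probU_eq: "probU g1 g2 u = (\<Sum>w\<in>A8. if fst (snd w) = u then pmf (joint g1 g2) w else 0)"
  unfolding probU_def
  by (simp add: measure_measure_pmf_finite A8_UNIV sum.If_cases)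

lemma sum_A8: "sum f (T :: (pm \<times> pm \<times> bact) set) = (\<Sum>w\<in>A8. if w \<in> T then f w else 0)"
  by (simp add: A8_UNIV sum.If_cases)

lemma belief_pmf:
  assumes "probU g1 g2 u > 0"
  shows "pmf (belief2 g1 g2 u) x =
    (\<Sum>w\<in>A8. if pm_mul (fst w) (fst (snd w)) = x \<and> fst (snd w) = u then pmf (joint g1 g2) w else 0)
      / probU g1 g2 u"
proof -
  let ?J = "joint g1 g2" and ?S = "{\<omega>. fst (snd \<omega>) = u}"
  have ne: "set_pmf ?J \<inter> ?S \<noteq> {}"
    using assms measure_pmf_zero_iff[of ?J ?S] unfolding probU_def by auto
  have "pmf (belief2 g1 g2 u) x = measure (cond_pmf ?J ?S) ((\<lambda>(x1, u', b). pm_mul x1 u') -` {x})"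
    unfolding belief2_def pmf_map by simp
  also have "\<dots> = sum (pmf (cond_pmf ?J ?S)) ((\<lambda>(x1, u', b). pm_mul x1 u') -` {x})"
    by (simp add: measure_measure_pmf_finite)
  also have "\<dots> = (\<Sum>w\<in>A8. if pm_mul (fst w) (fst (snd w)) = x \<and> fst (snd w) = u then pmf ?J w / probU g1 g2 u else 0)"
    apply (subst sum_A8)
    apply (rule sum.cong[OF refl])
    apply (auto simp: pmf_cond[OF ne] probU_def split_beta)
    done
  also have "\<dots> = (\<Sum>w\<in>A8. if pm_mul (fst w) (fst (snd w)) = x \<and> fst (snd w) = u then pmf ?J w else 0)
      / probU g1 g2 u"
    unfolding sum_divide_distrib by (rule sum.cong) auto
  finally show ?thesis .
qed

lemma sign3:
  fixes p D :: real
  assumes "p * D \<ge> 0" "(1 - p) * D \<le> 0" "0 \<le> p" "p \<le> 1"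
  shows "(p = 1 \<and> D > 0) \<or> (p = 0 \<and> D < 0) \<or> D = 0"
proof (cases "D > 0")
  case True
  then have "1 - p \<le> 0" using assms(2) by (simp add: mult_le_0_iff)
  then show ?thesis using True assms by auto
next
  case False
  show ?thesis
  proof (cases "D < 0")
    case True
    then have "p \<le> 0" using assms(1) by (simp add: zero_le_mult_iff)
    then show ?thesis using True assms by auto
  qed (use False in auto)
qed

lemma arith_core:
  fixes c p q a b :: real
  assumes "0 < c" "c < 1/3" "0 \<le> p" "p \<le> 1" "0 \<le> q" "q \<le> 1" "0 \<le> a" "a \<le> 1" "0 \<le> b" "b \<le> 1"
    and "F c 1 q a b \<le> F c p q a b" "F c 0 q a b \<le> F c p q a b"
    and "F c p 1 a b \<le> F c p q a b" "F c p 0 a b \<le> F c p q a b"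
    and "- F c p q 1 b \<le> - F c p q a b" "- F c p q 0 b \<le> - F c p q a b"
    and "- F c p q a 1 \<le> - F c p q a b" "- F c p q a 0 \<le> - F c p q a b"
  shows "p = 1/3 \<and> q = 2/3 \<and> a = 1/3 - c \<and> b = 1/3 + c"
proof -
  have h1: "p * (c+2*a-1+b) \<ge> 0" "(1-p) * (c+2*a-1+b) \<le> 0"
    using assms(11,12) unfolding F_def by (simp_all add: field_simps)
  have h2: "q * (c+1-a-2*b) \<ge> 0" "(1-q) * (c+1-a-2*b) \<le> 0"
    using assms(13,14) unfolding F_def by (simp_all add: field_simps)
  have h3: "a * (q - 2*p) \<ge> 0" "(1-a) * (q - 2*p) \<le> 0"
    using assms(15,16) unfolding F_def by (simp_all add: field_simps)
  have h4: "b * (2*q - 1 - p) \<ge> 0" "(1-b) * (2*q - 1 - p) \<le> 0"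
    using assms(17,18) unfolding F_def by (simp_all add: field_simps)
  from sign3[OF h1 assms(3,4)] sign3[OF h2 assms(5,6)] sign3[OF h3 assms(7,8)] sign3[OF h4 assms(9,10)]
  show ?thesis using assms(1,2) assms(3-10) by (elim disjE conjE) linarith+
qed

theorem proposition3:
  fixes c :: real
  assumes "0 < c" and "c < 1/3"
  shows "\<not> (\<exists>g1 g2. belief_based_eq c g1 g2)"
proof
  assume "\<exists>g1 g2. belief_based_eq c g1 g2"
  then obtain g1 g2 where bb: "belief_based_eq c g1 g2" by blast
  then have bne: "is_BNE c g1 g2" unfolding belief_based_eq_def by blast
  from bb obtain \<sigma> :: "pm pmf \<Rightarrow> bact pmf" where
    sig: "\<And>u. probU g1 g2 u > 0 \<Longrightarrow> g2 u = \<sigma> (belief2 g1 g2 u)"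
    unfolding belief_based_eq_def by blast
  have A: "payA c g1' g2 \<le> payA c g1 g2" for g1' using bne unfolding is_BNE_def by blast
  have B: "payB c g1 g2' \<le> payB c g1 g2" for g2' using bne unfolding is_BNE_def by blast
  note A' = A[unfolded payA_F] and B' = B[unfolded payB_F]
  have vals: "pp g1 = 1/3 \<and> qq g1 = 2/3 \<and> aa g2 = 1/3 - c \<and> bb g2 = 1/3 + c"
    apply (rule arith_core[OF assms])
    apply (simp_all add: pmf_nonneg pmf_le_1)
    using A'[of "g1(Plus := return_pmf Plus)"] A'[of "g1(Plus := return_pmf Minus)"]
      A'[of "g1(Minus := return_pmf Plus)"] A'[of "g1(Minus := return_pmf Minus)"]
      B'[of "g2(Plus := return_pmf Up)"] B'[of "g2(Plus := return_pmf Down)"]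
      B'[of "g2(Minus := return_pmf Up)"] B'[of "g2(Minus := return_pmf Down)"]
    by simp_all
  have pU: "probU g1 g2 u = 1/2" for u
    using vals by (cases u) (simp_all add: probU_eq A8_def pmf_joint pmf_pm_sum pmf_bact_sum field_simps)
  have bel: "belief2 g1 g2 Plus = belief2 g1 g2 Minus"
  proof (rule pmf_eqI)
    fix x
    show "pmf (belief2 g1 g2 Plus) x = pmf (belief2 g1 g2 Minus) x"
      using vals
      by (cases x) (simp_all add: belief_pmf pU A8_def pmf_joint pmf_pm_sum pmf_bact_sum pm_mul_def field_simps)
  qed
  have "g2 Plus = g2 Minus" using sig[of Plus] sig[of Minus] pU bel by simp
  then have "aa g2 = bb g2" by simp
  then show False using vals assms by simp
qed

end
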